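(* Let $\lambda>0$, let $K(\sigma,\tau)=\exp(-\lambda d(\sigma,\tau))$ on $S_n$ with RKHS $\mathcal H$ and feature map $\phi:S_n\to\mathcal H$ (so $\langle\phi(\sigma),\phi(\tau)\rangle_{\mathcal H}=K(\sigma,\tau)$). Let $R\subseteq S_n$ be a top-$k$ partial ranking, $p$ the uniform distribution on $R$, and $\mu_p=\frac1{|R|}\sum_{\sigma\in R}\phi(\sigma)$. Then for every $\sigma_1\in R$, the function $$\sigma_2\mapsto\Big\|\mu_p-\tfrac12\big(\phi(\sigma_1)+\phi(\sigma_2)\big)\Big\|_{\mathcal H}^2,\qquad\sigma_2\in R,$$ has a unique minimiser over $R$, namely $\sigma_2=A_R(\sigma_1)$. That is, the second step of kernel herding for $p$ started from any $\sigma_1\in R$ produces exactly the antithetic sample of $\sigma_1$.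
   Context: $S_n$ is the symmetric group on $[n]$; $\sigma\in S_n$ is identified with the full ranking $\sigma(1)\succ\cdots\succ\sigma(n)$. For distinct items $x,y$, $\{x,y\}$ is discordant for $\sigma,\tau$ if $(\sigma^{-1}(x)-\sigma^{-1}(y))(\tau^{-1}(x)-\tau^{-1}(y))<0$. The Kendall distance $d(\sigma,\tau)$ is the number of unordered discordant pairs; $K$ is a positive definite kernel. For $0\le k\le n$ and distinct $a_1,\dots,a_k\in[n]$, the top-$k$ partial ranking is the set $R=\{\sigma\in S_n:\sigma(i)=a_i,\ i\le k\}$. The antithetic operator $A_R:R\to R$ is $A_R(\sigma)(i)=a_i$ for $i\le k$ and $A_R(\sigma)(k+j)=\sigma(n+1-j)$ for $j=1,\dots,n-k$. *)

theory Defs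
  imports "HOL-Analysis.Analysis" "HOL-Combinatorics.Permutations"
begin

text \<open>A full ranking on [n] = {1..n} is a permutation sigma (sigma permutes {1..n});
  sigma i is the item in position i, inv sigma x is the position of item x.\<close>

definition discordant :: "(nat \<Rightarrow> nat) \<Rightarrow> (nat \<Rightarrow> nat) \<Rightarrow> nat \<Rightarrow> nat \<Rightarrow> bool" where
  "discordant \<sigma> \<tau> x y \<longleftrightarrow>
     (int (inv \<sigma> x) - int (inv \<sigma> y)) * (int (inv \<tau> x) - int (inv \<tau> y)) < 0"

definition kendall :: "nat \<Rightarrow> (nat \<Rightarrow> nat) \<Rightarrow> (nat \<Rightarrow> nat) \<Rightarrow> nat" where
  "kendall n \<sigma> \<tau> = card {(x, y). x \<in> {1..n} \<and> y \<in> {1..n} \<and> x < y \<and> discordant \<sigma> \<tau> x y}"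

definition mallows_kernel :: "real \<Rightarrow> nat \<Rightarrow> (nat \<Rightarrow> nat) \<Rightarrow> (nat \<Rightarrow> nat) \<Rightarrow> real" where
  "mallows_kernel lam n \<sigma> \<tau> = exp (- lam * real (kendall n \<sigma> \<tau>))"

definition top_k :: "nat \<Rightarrow> nat \<Rightarrow> (nat \<Rightarrow> nat) \<Rightarrow> (nat \<Rightarrow> nat) set" where
  "top_k n k a = {\<sigma>. \<sigma> permutes {1..n} \<and> (\<forall>i\<in>{1..k}. \<sigma> i = a i)}"

definition antithetic :: "nat \<Rightarrow> nat \<Rightarrow> (nat \<Rightarrow> nat) \<Rightarrow> (nat \<Rightarrow> nat) \<Rightarrow> (nat \<Rightarrow> nat)" where
  "antithetic n k a \<sigma> = (\<lambda>i. if 1 \<le> i \<and> i \<le> k then a i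
                              else if k < i \<and> i \<le> n then \<sigma> (n + k + 1 - i)
                              else i)"

end

theory Submission imports Defs begin

lemma disc_self: "\<not> discordant \<sigma> \<sigma> x y"
  unfolding discordant_def by (simp add: not_less)

lemma disc_diag: "\<not> discordant \<sigma> \<tau> x x"
  unfolding discordant_def by simp

lemma kendall_self: "kendall n \<sigma> \<sigma> = 0"
  unfolding kendall_def by (simp add: disc_self)

lemma disc_sym: "discordant \<sigma> \<tau> x y = discordant \<sigma> \<tau> y x"
  unfolding discordant_def by (smt (verit) mult_minus_left mult_minus_right)

lemma kendall_D:
  "2 * kendall n \<sigma> \<tau> = card {(x, y). x \<in> {1..n} \<and> y \<in> {1..n} \<and> discordant \<sigma> \<tau> x y}"
proof -
  let ?L = "{(x, y). x \<in> {1..n} \<and> y \<in> {1..n} \<and> x < y \<and> discordant \<sigma> \<tau> x y}"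
  let ?G = "{(x, y). x \<in> {1..n} \<and> y \<in> {1..n} \<and> y < x \<and> discordant \<sigma> \<tau> x y}"
  have fin: "finite ?L" "finite ?G"
    by (rule finite_subset[of _ "{1..n} \<times> {1..n}"], auto)+
  have G: "?G = prod.swap ` ?L"
    by (auto simp: image_iff disc_sym)
  have cG: "card ?G = card ?L" unfolding G
    by (rule card_image) (simp add: inj_on_def)
  have D: "{(x, y). x \<in> {1..n} \<and> y \<in> {1..n} \<and> discordant \<sigma> \<tau> x y} = ?L \<union> ?G"
  proof -
    have "discordant \<sigma> \<tau> x y \<Longrightarrow> x < y \<or> y < x" for x y
      using disc_diag[of \<sigma> \<tau> x] by (cases "x = y") auto
    then show ?thesis by auto
  qed
  show ?thesis unfolding D kendall_def
    by (subst card_Un_disjoint) (use fin cG in auto)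
qed

lemma kendall_left:
  assumes p: "\<pi> permutes {1..n}" and s: "\<sigma> permutes {1..n}" and t: "\<tau> permutes {1..n}"
  shows "kendall n (\<pi> \<circ> \<sigma>) (\<pi> \<circ> \<tau>) = kendall n \<sigma> \<tau>"
proof -
  have hs: "inv (\<pi> \<circ> \<sigma>) = inv \<sigma> \<circ> inv \<pi>"
    by (rule o_inv_distrib) (use p s permutes_bij in auto)
  have ht: "inv (\<pi> \<circ> \<tau>) = inv \<tau> \<circ> inv \<pi>"
    by (rule o_inv_distrib) (use p t permutes_bij in auto)
  let ?D = "\<lambda>s t. {(x, y). x \<in> {1..n} \<and> y \<in> {1..n} \<and> discordant s t x y}"
  have "?D (\<pi> \<circ> \<sigma>) (\<pi> \<circ> \<tau>) = map_prod \<pi> \<pi> ` ?D \<sigma> \<tau>"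
  proof (rule set_eqI, rule iffI)
    fix z assume "z \<in> ?D (\<pi> \<circ> \<sigma>) (\<pi> \<circ> \<tau>)"
    then obtain x y where z: "z = (x,y)" "x \<in> {1..n}" "y \<in> {1..n}"
      "discordant (\<pi> \<circ> \<sigma>) (\<pi> \<circ> \<tau>) x y" by auto
    then have d1: "discordant \<sigma> \<tau> (inv \<pi> x) (inv \<pi> y)"
      by (simp add: discordant_def hs ht)
    have d2: "inv \<pi> x \<in> {1..n}" "inv \<pi> y \<in> {1..n}"
      using z permutes_in_image[OF permutes_inv[OF p]] by auto
    show "z \<in> map_prod \<pi> \<pi> ` ?D \<sigma> \<tau>"
    proof -
      have "(inv \<pi> x, inv \<pi> y) \<in> ?D \<sigma> \<tau>" using d1 d2 by auto
      moreover have "z = map_prod \<pi> \<pi> (inv \<pi> x, inv \<pi> y)"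
        using z permutes_inverses[OF p] by simp
      ultimately show ?thesis by blast
    qed
  next
    fix z assume "z \<in> map_prod \<pi> \<pi> ` ?D \<sigma> \<tau>"
    then obtain x y where z: "z = (\<pi> x, \<pi> y)" "x \<in> {1..n}" "y \<in> {1..n}"
      "discordant \<sigma> \<tau> x y" by auto
    then show "z \<in> ?D (\<pi> \<circ> \<sigma>) (\<pi> \<circ> \<tau>)"
      using permutes_inverses[OF p] permutes_in_image[OF p]
      by (auto simp: discordant_def hs ht)
  qed
  moreover have "card (map_prod \<pi> \<pi> ` ?D \<sigma> \<tau>) = card (?D \<sigma> \<tau>)"
    by (rule card_image) (use permutes_inj[OF p] in \<open>auto simp: inj_on_def inj_def\<close>)
  ultimately have "2 * kendall n (\<pi> \<circ> \<sigma>) (\<pi> \<circ> \<tau>) = 2 * kendall n \<sigma> \<tau>"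
    by (simp add: kendall_D)
  then show ?thesis by simp
qed


lemma dec_rev:
  fixes g :: "nat \<Rightarrow> nat"
  assumes rng: "\<And>j. k < j \<Longrightarrow> j \<le> n \<Longrightarrow> k < g j \<and> g j \<le> n"
    and dec: "\<And>j j'. k < j \<Longrightarrow> j < j' \<Longrightarrow> j' \<le> n \<Longrightarrow> g j' < g j"
    and j: "k < j" "j \<le> n"
  shows "g j = n + k + 1 - j"
proof -
  have lo: "m < n - k \<Longrightarrow> k + m < g (n - m)" for m
  proof (induction m)
    case 0 then show ?case using rng[of n] by auto
  next
    case (Suc m)
    then have "k + m < g (n - m)" by auto
    moreover have "g (n - m) < g (n - Suc m)" using dec[of "n - Suc m" "n - m"] Suc.prems by auto
    ultimately show ?case by auto
  qed
  have hi: "m < n - k \<Longrightarrow> g (k + 1 + m) \<le> n - m" for m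
  proof (induction m)
    case 0 then show ?case using rng[of "k+1"] by auto
  next
    case (Suc m)
    then have "g (k + 1 + m) \<le> n - m" by auto
    moreover have "g (k + 1 + Suc m) < g (k + 1 + m)" using dec[of "k + 1 + m" "k + 1 + Suc m"] Suc.prems by auto
    ultimately show ?case by auto
  qed
  have "k + (n - j) < g (n - (n - j))" using lo[of "n - j"] j by auto
  moreover have "g (k + 1 + (j - k - 1)) \<le> n - (j - k - 1)" using hi[of "j - k - 1"] j by auto
  ultimately show ?thesis using j by auto
qed

context
  fixes n k :: nat and a :: "nat \<Rightarrow> nat"
  assumes kn: "k \<le> n" and a_inj: "inj_on a {1..k}" and a_range: "a ` {1..k} \<subseteq> {1..n}"
begin

definition "T = {1..n} - a ` {1..k}"

lemma pos_pre: "\<sigma> \<in> top_k n k a \<Longrightarrow> i \<in> {1..k} \<Longrightarrow> inv \<sigma> (a i) = i"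
proof -
  assume s: "\<sigma> \<in> top_k n k a" and i: "i \<in> {1..k}"
  have p: "\<sigma> permutes {1..n}" and "\<sigma> i = a i" using s i by (auto simp: top_k_def)
  then show ?thesis using permutes_inverses(2)[OF p, of i] by simp
qed

lemma pos_tail: assumes s: "\<sigma> \<in> top_k n k a" and y: "y \<in> T"
  shows "k < inv \<sigma> y \<and> inv \<sigma> y \<le> n"
proof -
  have p: "\<sigma> permutes {1..n}" and pa: "\<forall>i\<in>{1..k}. \<sigma> i = a i" using s by (auto simp: top_k_def)
  have "inv \<sigma> y \<in> {1..n}" using y permutes_in_image[OF permutes_inv[OF p]] by (auto simp: T_def)
  moreover have "\<not> inv \<sigma> y \<in> {1..k}"
  proof
    assume "inv \<sigma> y \<in> {1..k}"
    then have "a (inv \<sigma> y) = y" using pa permutes_inverses(1)[OF p] by metis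
    then have "y \<in> a ` {1..k}" using \<open>inv \<sigma> y \<in> {1..k}\<close> by (metis image_eqI)
    then show False using y by (auto simp: T_def)
  qed
  ultimately show ?thesis by auto
qed

lemma disc_sub: assumes s: "\<sigma> \<in> top_k n k a" and t: "\<tau> \<in> top_k n k a"
    and x: "x \<in> {1..n}" and y: "y \<in> {1..n}" and d: "discordant \<sigma> \<tau> x y"
  shows "x \<in> T \<and> y \<in> T"
proof (rule ccontr)
  have split: "z \<in> {1..n} \<Longrightarrow> z \<in> T \<or> (\<exists>i\<in>{1..k}. z = a i)" for z by (auto simp: T_def)
  assume "\<not> (x \<in> T \<and> y \<in> T)"
  then consider (a) i where "i \<in> {1..k}" "x = a i" | (b) i where "i \<in> {1..k}" "y = a i"
    using split x y by blast
  then show False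
  proof cases
    case a
    note ix = pos_pre[OF s a(1)] pos_pre[OF t a(1)]
    show False
    proof (cases "y \<in> T")
      case True
      then show False using pos_tail[OF s True] pos_tail[OF t True] d a ix
        by (auto simp: discordant_def mult_less_0_iff)
    next
      case False
      then obtain j where j: "j \<in> {1..k}" "y = a j" using split y by blast
      then show False using pos_pre[OF s j(1)] pos_pre[OF t j(1)] d a ix
        by (auto simp: discordant_def mult_less_0_iff)
    qed
  next
    case b
    note ix = pos_pre[OF s b(1)] pos_pre[OF t b(1)]
    show False
    proof (cases "x \<in> T")
      case True
      then show False using pos_tail[OF s True] pos_tail[OF t True] d b ix
        by (auto simp: discordant_def mult_less_0_iff)
    next
      case False
      then obtain j where j: "j \<in> {1..k}" "x = a j" using split x by blast
      then show False using pos_pre[OF s j(1)] pos_pre[OF t j(1)] d b ix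
        by (auto simp: discordant_def mult_less_0_iff)
    qed
  qed
qed

definition "rv = (\<lambda>i::nat. if k < i \<and> i \<le> n then n + k + 1 - i else i)"

lemma rv_perm: "rv permutes {1..n}"
proof (rule bij_imp_permutes)
  have inv: "rv (rv x) = x" for x by (auto simp: rv_def)
  show "bij_betw rv {1..n} {1..n}"
    by (rule bij_betw_byWitness[where f'=rv]) (auto simp: inv, auto simp: rv_def)
  show "x \<notin> {1..n} \<Longrightarrow> rv x = x" for x using kn by (auto simp: rv_def)
qed

lemma anti_eq: assumes s: "\<sigma> \<in> top_k n k a"
  shows "antithetic n k a \<sigma> = \<sigma> \<circ> rv"
proof
  fix i
  have p: "\<sigma> permutes {1..n}" and pa: "\<forall>i\<in>{1..k}. \<sigma> i = a i" using s by (auto simp: top_k_def)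
  show "antithetic n k a \<sigma> i = (\<sigma> \<circ> rv) i"
    using pa permutes_not_in[OF p, of i] by (auto simp: antithetic_def rv_def)
qed

lemma anti_in: assumes s: "\<sigma> \<in> top_k n k a" shows "antithetic n k a \<sigma> \<in> top_k n k a"
proof -
  have p: "\<sigma> permutes {1..n}" and pa: "\<forall>i\<in>{1..k}. \<sigma> i = a i" using s by (auto simp: top_k_def)
  show ?thesis unfolding anti_eq[OF s] top_k_def
    using permutes_compose[OF rv_perm p] pa by (auto simp: rv_def)
qed

lemma anti_disc: assumes s: "\<sigma> \<in> top_k n k a" and x: "x \<in> T" and y: "y \<in> T" and xy: "x \<noteq> y"
  shows "discordant \<sigma> (antithetic n k a \<sigma>) x y"
proof -
  have p: "\<sigma> permutes {1..n}" using s by (auto simp: top_k_def)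
  have pA: "antithetic n k a \<sigma> permutes {1..n}" using anti_in[OF s] by (auto simp: top_k_def)
  have gen: "inv (antithetic n k a \<sigma>) z = n + k + 1 - inv \<sigma> z" if z: "z \<in> T" for z
  proof -
    have pz: "k < inv \<sigma> z \<and> inv \<sigma> z \<le> n" using pos_tail[OF s z] .
    have "antithetic n k a \<sigma> (n + k + 1 - inv \<sigma> z) = z"
      using pz permutes_inverses(1)[OF p] by (auto simp: antithetic_def)
    then show ?thesis using permutes_inv_eq[OF pA] by blast
  qed
  have "inv \<sigma> x \<noteq> inv \<sigma> y" using xy permutes_inverses(1)[OF p] by metis
  then show ?thesis using gen[OF x] gen[OF y] pos_tail[OF s x] pos_tail[OF s y]
    by (auto simp: discordant_def mult_less_0_iff)
qed

definition "P = {(x, y). x \<in> T \<and> y \<in> T \<and> x < y}"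

lemma finP: "finite P" by (rule finite_subset[of _ "{1..n} \<times> {1..n}"]) (auto simp: P_def T_def)

lemma kendall_le: assumes s: "\<sigma> \<in> top_k n k a" and t: "\<tau> \<in> top_k n k a"
  shows "kendall n \<sigma> \<tau> \<le> card P"
  unfolding kendall_def
proof (rule card_mono[OF finP], rule subsetI)
  fix z assume "z \<in> {(x, y). x \<in> {1..n} \<and> y \<in> {1..n} \<and> x < y \<and> discordant \<sigma> \<tau> x y}"
  then obtain x y where z: "z = (x, y)" "x \<in> {1..n}" "y \<in> {1..n}" "x < y" "discordant \<sigma> \<tau> x y"
    by blast
  then have "x \<in> T \<and> y \<in> T" using disc_sub[OF s t] by blast
  then show "z \<in> P" using z by (simp add: P_def)
qed

lemma kendall_anti: assumes s: "\<sigma> \<in> top_k n k a"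
  shows "kendall n \<sigma> (antithetic n k a \<sigma>) = card P"
proof -
  have "{(x, y). x \<in> {1..n} \<and> y \<in> {1..n} \<and> x < y \<and> discordant \<sigma> (antithetic n k a \<sigma>) x y} = P"
  proof (rule set_eqI, rule iffI)
    fix z assume "z \<in> {(x, y). x \<in> {1..n} \<and> y \<in> {1..n} \<and> x < y \<and> discordant \<sigma> (antithetic n k a \<sigma>) x y}"
    then obtain x y where z: "z = (x, y)" "x \<in> {1..n}" "y \<in> {1..n}" "x < y"
      "discordant \<sigma> (antithetic n k a \<sigma>) x y" by blast
    then have "x \<in> T \<and> y \<in> T" using disc_sub[OF s anti_in[OF s]] by blast
    then show "z \<in> P" using z by (simp add: P_def)
  next
    fix z assume "z \<in> P"
    then obtain x y where z: "z = (x, y)" "x \<in> T" "y \<in> T" "x < y" by (auto simp: P_def)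
    then have "discordant \<sigma> (antithetic n k a \<sigma>) x y" using anti_disc[OF s] by simp
    moreover have "x \<in> {1..n}" "y \<in> {1..n}" using z by (auto simp: T_def)
    ultimately show "z \<in> {(x, y). x \<in> {1..n} \<and> y \<in> {1..n} \<and> x < y \<and> discordant \<sigma> (antithetic n k a \<sigma>) x y}"
      using z by simp
  qed
  then show ?thesis by (simp add: kendall_def)
qed

lemma kendall_eq: assumes s: "\<sigma> \<in> top_k n k a" and t: "\<tau> \<in> top_k n k a"
    and e: "kendall n \<sigma> \<tau> = card P"
  shows "\<tau> = antithetic n k a \<sigma>"
proof -
  have p: "\<sigma> permutes {1..n}" and pa: "\<forall>i\<in>{1..k}. \<sigma> i = a i" using s by (auto simp: top_k_def)
  have q: "\<tau> permutes {1..n}" and qa: "\<forall>i\<in>{1..k}. \<tau> i = a i" using t by (auto simp: top_k_def)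
  let ?Dc = "{(x, y). x \<in> {1..n} \<and> y \<in> {1..n} \<and> x < y \<and> discordant \<sigma> \<tau> x y}"
  have "?Dc \<subseteq> P" using disc_sub[OF s t] by (auto simp: P_def)
  then have "?Dc = P" using card_subset_eq[OF finP] e by (simp add: kendall_def)
  then have allP: "x \<in> T \<Longrightarrow> y \<in> T \<Longrightarrow> x < y \<Longrightarrow> discordant \<sigma> \<tau> x y" for x y
    by (auto simp: P_def T_def)
  have allT: "x \<in> T \<Longrightarrow> y \<in> T \<Longrightarrow> x \<noteq> y \<Longrightarrow> discordant \<sigma> \<tau> x y" for x y
    using allP disc_sym by (metis linorder_neqE_nat)
  define g where "g j = inv \<tau> (\<sigma> j)" for j
  have inT: "k < j \<Longrightarrow> j \<le> n \<Longrightarrow> \<sigma> j \<in> T" for j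
  proof -
    assume j: "k < j" "j \<le> n"
    have "\<sigma> j \<in> {1..n}" using j permutes_in_image[OF p] by auto
    moreover have "\<sigma> j \<noteq> a i" if "i \<in> {1..k}" for i
    proof
      assume "\<sigma> j = a i"
      then have "\<sigma> j = \<sigma> i" using pa that by auto
      then have "j = i" using permutes_inj[OF p] by (auto dest: injD)
      then show False using j that by auto
    qed
    ultimately show "\<sigma> j \<in> T" unfolding T_def by blast
  qed
  have rng: "k < j \<Longrightarrow> j \<le> n \<Longrightarrow> k < g j \<and> g j \<le> n" for j
    using pos_tail[OF t inT] by (simp add: g_def)
  have dec: "g j' < g j" if j: "k < j" "j < j'" "j' \<le> n" for j j'
  proof -
    have "\<sigma> j \<noteq> \<sigma> j'" using j permutes_inj[OF p] by (auto dest: injD)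
    then have "discordant \<sigma> \<tau> (\<sigma> j) (\<sigma> j')" using allT inT j by auto
    then show ?thesis using j permutes_inverses(2)[OF p]
      by (auto simp: discordant_def g_def mult_less_0_iff)
  qed
  show ?thesis
  proof
    fix i
    consider "1 \<le> i \<and> i \<le> k" | "k < i \<and> i \<le> n" | "\<not> (1 \<le> i \<and> i \<le> n)" by linarith
    then show "\<tau> i = antithetic n k a \<sigma> i"
    proof cases
      case 1 then show ?thesis using qa by (auto simp: antithetic_def)
    next
      case 2
      define j where "j = n + k + 1 - i"
      have j: "k < j" "j \<le> n" using 2 by (auto simp: j_def)
      have "g j = n + k + 1 - j" by (rule dec_rev[OF rng dec j])
      then have "g j = i" using 2 by (auto simp: j_def)
      then have "\<tau> i = \<sigma> j" using permutes_inverses(1)[OF q] by (auto simp: g_def)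
      then show ?thesis using 2 by (auto simp: antithetic_def j_def)
    next
      case 3 then show ?thesis using kn permutes_not_in[OF q, of i] by (auto simp: antithetic_def)
    qed
  qed
qed

lemma kendall_max: "\<sigma> \<in> top_k n k a \<Longrightarrow> \<tau> \<in> top_k n k a \<Longrightarrow>
   kendall n \<sigma> \<tau> \<le> kendall n \<sigma> (antithetic n k a \<sigma>)"
  using kendall_le kendall_anti by simp

lemma kendall_max_eq: "\<sigma> \<in> top_k n k a \<Longrightarrow> \<tau> \<in> top_k n k a \<Longrightarrow>
   kendall n \<sigma> (antithetic n k a \<sigma>) \<le> kendall n \<sigma> \<tau> \<Longrightarrow> \<tau> = antithetic n k a \<sigma>"
  using kendall_le kendall_anti kendall_eq by (metis le_antisym)

lemma anti_in': "\<sigma> \<in> top_k n k a \<Longrightarrow> antithetic n k a \<sigma> \<in> top_k n k a"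
  by (rule anti_in)

end

lemma sum_const:
  assumes s1: "\<sigma>1 \<in> top_k n k a" and t: "\<tau> \<in> top_k n k a"
  shows "(\<Sum>\<sigma>\<in>top_k n k a. mallows_kernel lam n \<sigma> \<tau>) = (\<Sum>\<sigma>\<in>top_k n k a. mallows_kernel lam n \<sigma> \<sigma>1)"
proof -
  let ?R = "top_k n k a"
  have p1: "\<sigma>1 permutes {1..n}" and pa1: "\<forall>i\<in>{1..k}. \<sigma>1 i = a i" using s1 by (auto simp: top_k_def)
  have q: "\<tau> permutes {1..n}" and qa: "\<forall>i\<in>{1..k}. \<tau> i = a i" using t by (auto simp: top_k_def)
  define \<pi> where "\<pi> = \<tau> \<circ> inv \<sigma>1"
  have pp: "\<pi> permutes {1..n}" unfolding \<pi>_def by (rule permutes_compose[OF permutes_inv[OF p1] q])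
  have pfix: "\<pi> (a i) = a i" if "i \<in> {1..k}" for i
  proof -
    have "inv \<sigma>1 (a i) = i" using pa1 that permutes_inverses(2)[OF p1] by metis
    then show ?thesis using qa that by (simp add: \<pi>_def)
  qed
  have ipfix: "inv \<pi> (a i) = a i" if "i \<in> {1..k}" for i
    using pfix[OF that] permutes_inv_eq[OF pp] by blast
  have pt: "\<pi> \<circ> \<sigma>1 = \<tau>" unfolding \<pi>_def using permutes_inv_o(2)[OF p1] by (simp add: comp_assoc)
  have bij: "bij_betw (\<lambda>\<sigma>. \<pi> \<circ> \<sigma>) ?R ?R"
  proof (rule bij_betw_byWitness[where f' = "\<lambda>\<sigma>. inv \<pi> \<circ> \<sigma>"])
    show "\<forall>x\<in>?R. inv \<pi> \<circ> (\<pi> \<circ> x) = x" using permutes_inv_o(2)[OF pp] by (simp add: o_assoc)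
    show "\<forall>x\<in>?R. \<pi> \<circ> (inv \<pi> \<circ> x) = x" using permutes_inv_o(1)[OF pp] by (simp add: o_assoc)
    show "(\<lambda>\<sigma>. \<pi> \<circ> \<sigma>) ` ?R \<subseteq> ?R"
      using permutes_compose[OF _ pp] pfix by (auto simp: top_k_def)
    show "(\<lambda>\<sigma>. inv \<pi> \<circ> \<sigma>) ` ?R \<subseteq> ?R"
      using permutes_compose[OF _ permutes_inv[OF pp]] ipfix by (auto simp: top_k_def)
  qed
  have "(\<Sum>\<sigma>\<in>?R. mallows_kernel lam n \<sigma> \<tau>) = (\<Sum>\<sigma>\<in>?R. mallows_kernel lam n (\<pi> \<circ> \<sigma>) \<tau>)"
    by (rule sum.reindex_bij_betw[OF bij, symmetric])
  also have "\<dots> = (\<Sum>\<sigma>\<in>?R. mallows_kernel lam n \<sigma> \<sigma>1)"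
  proof (rule sum.cong[OF refl])
    fix \<sigma> assume "\<sigma> \<in> ?R"
    then have "\<sigma> permutes {1..n}" by (auto simp: top_k_def)
    then show "mallows_kernel lam n (\<pi> \<circ> \<sigma>) \<tau> = mallows_kernel lam n \<sigma> \<sigma>1"
      using kendall_left[OF pp _ p1] pt by (metis mallows_kernel_def)
  qed
  finally show ?thesis .
qed

theorem theorem6:
  fixes lam :: real and n k :: nat and a :: "nat \<Rightarrow> nat"
    and \<phi> :: "(nat \<Rightarrow> nat) \<Rightarrow> 'h::real_inner"
    and \<sigma>1 :: "nat \<Rightarrow> nat"
  assumes lam_pos: "lam > 0"
    and kn: "k \<le> n"
    and a_inj: "inj_on a {1..k}"
    and a_range: "a ` {1..k} \<subseteq> {1..n}"
    and feat: "\<And>\<sigma> \<tau>. \<sigma> permutes {1..n} \<Longrightarrow> \<tau> permutes {1..n} \<Longrightarrow>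
                  inner (\<phi> \<sigma>) (\<phi> \<tau>) = mallows_kernel lam n \<sigma> \<tau>"
    and s1: "\<sigma>1 \<in> top_k n k a"
  defines "R \<equiv> top_k n k a"
  defines "\<mu> \<equiv> (1 / real (card R)) *\<^sub>R (\<Sum>\<sigma>\<in>R. \<phi> \<sigma>)"
  defines "f \<equiv> (\<lambda>\<sigma>2. (norm (\<mu> - (1/2) *\<^sub>R (\<phi> \<sigma>1 + \<phi> \<sigma>2)))\<^sup>2)"
  shows "antithetic n k a \<sigma>1 \<in> R
         \<and> (\<forall>\<tau>\<in>R. f (antithetic n k a \<sigma>1) \<le> f \<tau>)
         \<and> (\<forall>\<sigma>2\<in>R. (\<forall>\<tau>\<in>R. f \<sigma>2 \<le> f \<tau>) \<longrightarrow> \<sigma>2 = antithetic n k a \<sigma>1)"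
proof -
  let ?K = "mallows_kernel lam n"
  let ?A = "antithetic n k a \<sigma>1"
  have perm: "\<sigma> \<in> R \<Longrightarrow> \<sigma> permutes {1..n}" for \<sigma> by (auto simp: R_def top_k_def)
  have AR: "?A \<in> R" unfolding R_def by (rule anti_in'[OF kn a_inj a_range s1])
  have s1R: "\<sigma>1 \<in> R" using s1 by (simp add: R_def)
  have self: "\<sigma> \<in> R \<Longrightarrow> inner (\<phi> \<sigma>) (\<phi> \<sigma>) = 1" for \<sigma>
    using feat[OF perm perm] by (simp add: mallows_kernel_def kendall_self)
  define S where "S = (\<Sum>\<sigma>\<in>R. ?K \<sigma> \<sigma>1)"
  have imu: "inner \<mu> (\<phi> \<tau>) = S / real (card R)" if t: "\<tau> \<in> R" for \<tau>
  proof -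
    have "inner \<mu> (\<phi> \<tau>) = (1 / real (card R)) * (\<Sum>\<sigma>\<in>R. inner (\<phi> \<sigma>) (\<phi> \<tau>))"
      by (simp add: \<mu>_def inner_sum_left)
    also have "(\<Sum>\<sigma>\<in>R. inner (\<phi> \<sigma>) (\<phi> \<tau>)) = (\<Sum>\<sigma>\<in>R. ?K \<sigma> \<tau>)"
      by (rule sum.cong[OF refl]) (use feat perm t in auto)
    also have "\<dots> = S" unfolding S_def R_def by (rule sum_const[OF s1 t[unfolded R_def]])
    finally show ?thesis by simp
  qed
  define E where "E = inner \<mu> \<mu> - inner \<mu> (\<phi> \<sigma>1) - S / real (card R) + 1/2"
  have fe: "f \<tau> = E + ?K \<sigma>1 \<tau> / 2" if t: "\<tau> \<in> R" for \<tau>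
  proof -
    have "f \<tau> = inner \<mu> \<mu> - inner \<mu> (\<phi> \<sigma>1) - inner \<mu> (\<phi> \<tau>)
        + (inner (\<phi> \<sigma>1) (\<phi> \<sigma>1) + 2 * inner (\<phi> \<sigma>1) (\<phi> \<tau>) + inner (\<phi> \<tau>) (\<phi> \<tau>)) / 4"
      unfolding f_def power2_norm_eq_inner
      by (simp add: inner_diff_left inner_diff_right inner_add_left inner_add_right inner_commute algebra_simps)
    then show ?thesis using imu[OF t] imu[OF s1R] self[OF t] self[OF s1R] feat[OF perm[OF s1R] perm[OF t]]
      by (simp add: E_def)
  qed
  have kmax: "kendall n \<sigma>1 \<tau> \<le> kendall n \<sigma>1 ?A" if "\<tau> \<in> R" for \<tau>
    using kendall_max[OF kn a_inj a_range s1] that by (simp add: R_def)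
  have opt: "f ?A \<le> f \<tau>" if t: "\<tau> \<in> R" for \<tau>
  proof -
    have "?K \<sigma>1 ?A \<le> ?K \<sigma>1 \<tau>" using kmax[OF t] lam_pos
      by (simp add: mallows_kernel_def)
    then show ?thesis using fe[OF t] fe[OF AR] by simp
  qed
  have uniq: "\<sigma>2 = ?A" if s2: "\<sigma>2 \<in> R" and m: "\<forall>\<tau>\<in>R. f \<sigma>2 \<le> f \<tau>" for \<sigma>2
  proof -
    have "f \<sigma>2 \<le> f ?A" using m AR by blast
    then have "?K \<sigma>1 \<sigma>2 \<le> ?K \<sigma>1 ?A" using fe[OF s2] fe[OF AR] by simp
    then have "real (kendall n \<sigma>1 ?A) \<le> real (kendall n \<sigma>1 \<sigma>2)" using lam_pos
      by (simp add: mallows_kernel_def)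
    then show ?thesis using kendall_max_eq[OF kn a_inj a_range s1] s2 by (simp add: R_def)
  qed
  show ?thesis using AR opt uniq by blast
qed

end
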